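(* Let $m,n\ge 3$ be integers. If either ($m\not\equiv 0 \pmod 4$ and $n\neq 4$) or ($n\not\equiv 0\pmod 4$ and $m\neq 4$), then the direct product $C_m\times C_n$ is not a distance magic graph.
   Context: All graphs are finite and simple; $C_n$ denotes the cycle on $n$ vertices. For a graph $G$ and vertex $x$, $N(x)$ is the (open) neighborhood of $x$. A distance magic labeling of a graph $G$ of order $N$ is a bijection $\ell\colon V(G)\to\{1,\dots,N\}$ for which there is a constant $k$ such that $\sum_{y\in N(x)}\ell(y)=k$ for every $x\in V(G)$; $G$ is distance magic if it admits such a labeling. The direct product $G\times H$ has vertex set $V(G)\times V(H)$, with $(g,h)$ adjacent to $(g',h')$ iff $gg'\in E(G)$ and $hh'\in E(H)$. *)

theory Defs
  imports Main
begin

text \<open>A finite simple graph is represented by a vertex set V and a symmetric,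
irreflexive adjacency relation E (only its restriction to V matters).\<close>

definition neighborhood :: "'a set \<Rightarrow> ('a \<Rightarrow> 'a \<Rightarrow> bool) \<Rightarrow> 'a \<Rightarrow> 'a set" where
  "neighborhood V E x = {y \<in> V. E x y}"

definition distance_magic_labeling :: "'a set \<Rightarrow> ('a \<Rightarrow> 'a \<Rightarrow> bool) \<Rightarrow> ('a \<Rightarrow> nat) \<Rightarrow> bool" where
  "distance_magic_labeling V E l \<longleftrightarrow>
     bij_betw l V {1..card V} \<and>
     (\<exists>k. \<forall>x\<in>V. (\<Sum>y\<in>neighborhood V E x. l y) = k)"

definition distance_magic :: "'a set \<Rightarrow> ('a \<Rightarrow> 'a \<Rightarrow> bool) \<Rightarrow> bool" where
  "distance_magic V E \<longleftrightarrow> (\<exists>l. distance_magic_labeling V E l)"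

definition cycle_verts :: "nat \<Rightarrow> nat set" where
  "cycle_verts n = {0..<n}"

definition cycle_adj :: "nat \<Rightarrow> nat \<Rightarrow> nat \<Rightarrow> bool" where
  "cycle_adj n i j \<longleftrightarrow> i \<noteq> j \<and> (j = (i + 1) mod n \<or> i = (j + 1) mod n)"

definition direct_prod_verts :: "'a set \<Rightarrow> 'b set \<Rightarrow> ('a \<times> 'b) set" where
  "direct_prod_verts V W = V \<times> W"

definition direct_prod_adj ::
  "('a \<Rightarrow> 'a \<Rightarrow> bool) \<Rightarrow> ('b \<Rightarrow> 'b \<Rightarrow> bool) \<Rightarrow> ('a \<times> 'b) \<Rightarrow> ('a \<times> 'b) \<Rightarrow> bool" where
  "direct_prod_adj E F p q \<longleftrightarrow> E (fst p) (fst q) \<and> F (snd p) (snd q)"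

end

theory Submission
  imports Defs
begin

lemma key:
  fixes F :: "int \<Rightarrow> int \<Rightarrow> int" and m :: nat and k :: int
  assumes mm: "m mod 4 \<noteq> 0" "m > 0"
    and per: "\<And>x y. F (x + int m) y = F x y"
    and S: "\<And>x y. F (x+1) (y+1) + F (x+1) (y-1) + F (x-1) (y+1) + F (x-1) (y-1) = k"
  shows "F 0 0 = F 0 4"
proof -
  define G where "G x y = F x (y+1) + F x (y-1)" for x y
  have h2: "G x y + G (x+2) y = k" for x y
    using S[of "x+1" y] unfolding G_def by (simp add: algebra_simps)
  have h3: "G (x + 2 * int t) y = (if even t then G x y else k - G x y)" for x y t
  proof (induction t)
    case 0 then show ?case by simp
  next
    case (Suc t)
    have "G (x + 2 * int (Suc t)) y = k - G (x + 2 * int t) y"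
      using h2[of "x + 2 * int t" y] by (simp add: algebra_simps)
    then show ?case using Suc by auto
  qed
  have hp: "G (x + int m * int t) y = G x y" for x y t
  proof (induction t)
    case 0 then show ?case by simp
  next
    case (Suc t)
    have "G (x + int m * int (Suc t)) y = G (x + int m * int t) y"
      unfolding G_def using per[of "x + int m * int t"] by (simp add: algebra_simps)
    then show ?case using Suc by simp
  qed
  have G2: "2 * G x y = k" for x y
  proof (cases "odd m")
    case True
    have "G (x + 2 * int m) y = k - G x y" using h3[of x m y] True by simp
    moreover have "G (x + int m * int 2) y = G x y" using hp[of x 2 y] .
    ultimately show ?thesis by (simp add: mult.commute)
  next
    case False
    then obtain t where t: "m = 2 * t" by blast
    with mm have "odd t" by auto
    have "G (x + 2 * int t) y = k - G x y" using h3[of x t y] \<open>odd t\<close> by simp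
    moreover have "G (x + int m * int 1) y = G x y" using hp[of x 1 y] .
    ultimately show ?thesis using t by simp
  qed
  show ?thesis using G2[of 0 1] G2[of 0 3] unfolding G_def by simp
qed

lemma cyc_nb:
  assumes "m \<ge> 3"
  shows "{a \<in> cycle_verts m. cycle_adj m (nat (x mod int m)) a}
          = {nat ((x+1) mod int m), nat ((x-1) mod int m)}"
    and "nat ((x+1) mod int m) \<noteq> nat ((x-1) mod int m)"
proof -
  have mp: "int m > 2" using assms by simp
  have eq: "int (nat (z mod int m)) = z mod int m" for z using mp by simp
  have A: "((x+1) mod int m = (x-1) mod int m) = False"
  proof -
    have "\<not> int m dvd 2"
      using mp by (meson zdvd_imp_le zero_less_numeral not_le)
    then show ?thesis by (simp add: mod_eq_dvd_iff)
  qed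
  show "nat ((x+1) mod int m) \<noteq> nat ((x-1) mod int m)"
    using A eq by (metis)
  show "{a \<in> cycle_verts m. cycle_adj m (nat (x mod int m)) a}
          = {nat ((x+1) mod int m), nat ((x-1) mod int m)}"
  proof (rule set_eqI, rule iffI)
    fix a assume "a \<in> {a \<in> cycle_verts m. cycle_adj m (nat (x mod int m)) a}"
    then have am: "a < m" and c: "nat (x mod int m) \<noteq> a"
      "a = (nat (x mod int m) + 1) mod m \<or> nat (x mod int m) = (a + 1) mod m"
      by (auto simp: cycle_verts_def cycle_adj_def)
    have ia: "int a = int a mod int m" using am by simp
    from c(2) show "a \<in> {nat ((x+1) mod int m), nat ((x-1) mod int m)}"
    proof
      assume "a = (nat (x mod int m) + 1) mod m"
      then have "int a = (x mod int m + 1) mod int m"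
        using eq[of x] by (metis of_nat_1 of_nat_add of_nat_mod)
      then have "int a = (x+1) mod int m" by (simp add: mod_add_left_eq)
      then have "nat (int a) = nat ((x+1) mod int m)" by (rule arg_cong)
      then have "a = nat ((x+1) mod int m)" by (simp only: nat_int)
      then show ?thesis by (simp only: insert_iff simp_thms)
    next
      assume "nat (x mod int m) = (a + 1) mod m"
      then have "x mod int m = (int a + 1) mod int m"
        using eq[of x] by (metis of_nat_1 of_nat_add of_nat_mod)
      then have "(x - 1) mod int m = int a mod int m"
        by (metis add_diff_cancel_right' mod_diff_left_eq)
      then have "int a = (x-1) mod int m" using ia by simp
      then have "nat (int a) = nat ((x-1) mod int m)" by (rule arg_cong)
      then have "a = nat ((x-1) mod int m)" by (simp only: nat_int)
      then show ?thesis by (simp only: insert_iff simp_thms)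
    qed
  next
    fix a assume "a \<in> {nat ((x+1) mod int m), nat ((x-1) mod int m)}"
    then have "a = nat ((x+1) mod int m) \<or> a = nat ((x-1) mod int m)" by simp
    then show "a \<in> {a \<in> cycle_verts m. cycle_adj m (nat (x mod int m)) a}"
    proof
      assume a: "a = nat ((x+1) mod int m)"
      have ia: "int a = (x+1) mod int m" using a mp by simp
      have "int a < int m" using ia mp by simp
      then have "a < m" by (simp only: of_nat_less_iff)
      then have cv: "a \<in> cycle_verts m" by (simp add: cycle_verts_def)
      moreover have "int a = (x mod int m + 1) mod int m" using ia by (simp add: mod_add_left_eq)
      moreover have "int ((nat (x mod int m) + 1) mod m) = (x mod int m + 1) mod int m"
        by (simp only: of_nat_mod of_nat_add of_nat_1 eq)
      ultimately have "a = (nat (x mod int m) + 1) mod m" by (simp only: of_nat_eq_iff flip: of_nat_eq_iff)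
      moreover have "nat (x mod int m) \<noteq> a"
      proof
        assume "nat (x mod int m) = a"
        then have "x mod int m = (x+1) mod int m" using ia eq[of x] by simp
        then have "int m dvd (x+1) - x" by (simp add: mod_eq_dvd_iff)
        then have "int m dvd 1" by simp
        then show False using mp by simp
      qed
      ultimately show ?thesis using cv unfolding cycle_adj_def by blast
    next
      assume a: "a = nat ((x-1) mod int m)"
      have ia: "int a = (x-1) mod int m" using a mp by simp
      have "int a < int m" using ia mp by simp
      then have "a < m" by (simp only: of_nat_less_iff)
      then have cv: "a \<in> cycle_verts m" by (simp add: cycle_verts_def)
      moreover have "(int a + 1) mod int m = x mod int m" using ia
        by (metis diff_add_cancel mod_add_left_eq)
      moreover have "int ((a + 1) mod m) = (int a + 1) mod int m"
        by (simp only: of_nat_mod of_nat_add of_nat_1)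
      ultimately have "int (nat (x mod int m)) = int ((a + 1) mod m)" using eq[of x] by simp
      then have "nat (x mod int m) = (a + 1) mod m" by (simp only: of_nat_eq_iff)
      moreover have "nat (x mod int m) \<noteq> a"
      proof
        assume "nat (x mod int m) = a"
        then have "x mod int m = (x-1) mod int m" using ia eq[of x] by simp
        then have "int m dvd x - (x-1)" by (simp add: mod_eq_dvd_iff)
        then have "int m dvd 1" by simp
        then show False using mp by simp
      qed
      ultimately show ?thesis using cv unfolding cycle_adj_def by blast
    qed
  qed
qed


lemma nb_prod:
  assumes "m \<ge> 3" "n \<ge> 3"
  shows "neighborhood (direct_prod_verts (cycle_verts m) (cycle_verts n))
           (direct_prod_adj (cycle_adj m) (cycle_adj n)) (nat (x mod int m), nat (y mod int n))
         = {nat ((x+1) mod int m), nat ((x-1) mod int m)} \<times> {nat ((y+1) mod int n), nat ((y-1) mod int n)}"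
proof -
  have "neighborhood (direct_prod_verts (cycle_verts m) (cycle_verts n))
           (direct_prod_adj (cycle_adj m) (cycle_adj n)) (nat (x mod int m), nat (y mod int n))
      = {a \<in> cycle_verts m. cycle_adj m (nat (x mod int m)) a} \<times> {b \<in> cycle_verts n. cycle_adj n (nat (y mod int n)) b}"
    unfolding neighborhood_def direct_prod_verts_def direct_prod_adj_def by auto
  then show ?thesis using cyc_nb(1)[OF assms(1)] cyc_nb(1)[OF assms(2)] by simp
qed

theorem mainTheorem9:
  fixes m n :: nat
  assumes "m \<ge> 3" and "n \<ge> 3"
    and "(m mod 4 \<noteq> 0 \<and> n \<noteq> 4) \<or> (n mod 4 \<noteq> 0 \<and> m \<noteq> 4)"
  shows "\<not> distance_magic
           (direct_prod_verts (cycle_verts m) (cycle_verts n))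
           (direct_prod_adj (cycle_adj m) (cycle_adj n))"
proof
  let ?V = "direct_prod_verts (cycle_verts m) (cycle_verts n)"
  let ?E = "direct_prod_adj (cycle_adj m) (cycle_adj n)"
  assume "distance_magic ?V ?E"
  then obtain l k where bij: "bij_betw l ?V {1..card ?V}"
    and kk: "\<forall>p\<in>?V. (\<Sum>q\<in>neighborhood ?V ?E p. l q) = k"
    unfolding distance_magic_def distance_magic_labeling_def by blast
  have inj: "inj_on l ?V" using bij by (rule bij_betw_imp_inj_on)
  have mp: "int m > 0" "int n > 0" using assms by auto
  define F where "F x y = int (l (nat (x mod int m), nat (y mod int n)))" for x y
  have S: "F (x+1) (y+1) + F (x+1) (y-1) + F (x-1) (y+1) + F (x-1) (y-1) = int k" for x y
  proof -
    have inV: "(nat (x mod int m), nat (y mod int n)) \<in> ?V"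
      using mp unfolding direct_prod_verts_def cycle_verts_def
      by (simp add: nat_less_iff)
    have d1: "nat ((x+1) mod int m) \<noteq> nat ((x-1) mod int m)" using cyc_nb(2) assms(1) by blast
    have d2: "nat ((y+1) mod int n) \<noteq> nat ((y-1) mod int n)" using cyc_nb(2) assms(2) by blast
    have "k = (\<Sum>q\<in>{nat ((x+1) mod int m), nat ((x-1) mod int m)} \<times> {nat ((y+1) mod int n), nat ((y-1) mod int n)}. l q)"
      using bspec[OF kk inV] unfolding nb_prod[OF assms(1,2), of x y] by (rule sym)
    also have "\<dots> = (\<Sum>a\<in>{nat ((x+1) mod int m), nat ((x-1) mod int m)}. \<Sum>b\<in>{nat ((y+1) mod int n), nat ((y-1) mod int n)}. l (a,b))"
      by (simp add: sum.cartesian_product)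
    finally show ?thesis using d1 d2 unfolding F_def by simp
  qed
  have per1: "F (x + int m) y = F x y" for x y unfolding F_def by simp
  have per2: "F x (y + int n) = F x y" for x y unfolding F_def by simp
  from assms(3) show False
  proof
    assume h: "m mod 4 \<noteq> 0 \<and> n \<noteq> 4"
    have "F 0 0 = F 0 4" using key[of m F "int k", OF _ _ per1 S] h mp by simp
    then have "l (0, 0) = l (0, nat (4 mod int n))" unfolding F_def by simp
    moreover have "(0::nat, 0::nat) \<in> ?V" "(0::nat, nat (4 mod int n)) \<in> ?V"
      using assms mp unfolding direct_prod_verts_def cycle_verts_def by (auto simp: nat_less_iff)
    ultimately have "(0::nat, 0::nat) = (0, nat (4 mod int n))" using inj by (metis inj_on_eq_iff)
    then have "nat (4 mod int n) = 0" by simp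
    moreover have "0 \<le> (4::int) mod int n" using mp by simp
    ultimately have "(4::int) mod int n = 0" by linarith
    then have "n dvd 4" by (metis dvd_eq_mod_eq_0 of_nat_dvd_iff of_nat_numeral)
    then have "n \<le> 4" by (simp add: dvd_imp_le)
    then have "n = 3 \<or> n = 4" using assms by auto
    then show False using h \<open>n dvd 4\<close> by auto
  next
    assume h: "n mod 4 \<noteq> 0 \<and> m \<noteq> 4"
    have S': "(\<lambda>x y. F y x) (x+1) (y+1) + (\<lambda>x y. F y x) (x+1) (y-1) + (\<lambda>x y. F y x) (x-1) (y+1) + (\<lambda>x y. F y x) (x-1) (y-1) = int k" for x y
      using S[of y x] by simp
    have "(\<lambda>x y. F y x) 0 0 = (\<lambda>x y. F y x) 0 4"
      using key[of n "\<lambda>x y. F y x" "int k", OF _ _ per2 S'] h mp by simp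
    then have "l (0, 0) = l (nat (4 mod int m), 0)" unfolding F_def by simp
    moreover have "(0::nat, 0::nat) \<in> ?V" "(nat (4 mod int m), 0::nat) \<in> ?V"
      using assms mp unfolding direct_prod_verts_def cycle_verts_def by (auto simp: nat_less_iff)
    ultimately have "(0::nat, 0::nat) = (nat (4 mod int m), 0)" using inj by (metis inj_on_eq_iff)
    then have "nat (4 mod int m) = 0" by simp
    moreover have "0 \<le> (4::int) mod int m" using mp by simp
    ultimately have "(4::int) mod int m = 0" by linarith
    then have "m dvd 4" by (metis dvd_eq_mod_eq_0 of_nat_dvd_iff of_nat_numeral)
    then have "m \<le> 4" by (simp add: dvd_imp_le)
    then have "m = 3 \<or> m = 4" using assms by auto
    then show False using h \<open>m dvd 4\<close> by auto
  qed
qed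

end
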